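(* Let $a_1,\dots,a_n$ be positive integers and $K=R(a_1,\dots,a_n)$ a 2-bridge link. If $K$ is not $R(1,1,1,1)$, $R(1,a_2,1)$ (for any $a_2\ge1$), $R(1,1)$ or $R(1)$, then $$\det(R(a_1,\dots,a_n))\ge V(a_1,\dots,a_n).$$
   Context: For positive integers $b_1,\dots,b_r$, $R(b_1,\dots,b_r)$ denotes the 2-bridge link given by the standard alternating 2-bridge diagram with $r$ twist regions in a row, the $i$-th containing $b_i$ half-twists; $\det$ denotes $|\Delta(-1)|$ for the Alexander polynomial $\Delta$ (equivalently $\det R(b_1,\dots,b_r)=S(r)$ with $S(0)=1$, $S(1)=b_1$, $S(i+1)=b_{i+1}S(i)+S(i-1)$). $V(a_1,\dots,a_n)=\prod_{i=1}^n\frac{a_i+2}{2}$. *)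

theory Defs
  imports Complex_Main
begin

text \<open>For a list bs = [b_1,...,b_r] (0-indexed in Isabelle: b_i = bs!(i-1)):
  S(0)=1, S(1)=b_1, S(i+1) = b_{i+1} S(i) + S(i-1).\<close>

fun twobridge_S :: "nat list \<Rightarrow> nat \<Rightarrow> nat" where
  "twobridge_S bs 0 = 1"
| "twobridge_S bs (Suc 0) = bs ! 0"
| "twobridge_S bs (Suc (Suc i)) = bs ! (Suc i) * twobridge_S bs (Suc i) + twobridge_S bs i"

definition det_R :: "nat list \<Rightarrow> nat" where
  "det_R bs = twobridge_S bs (length bs)"

definition V :: "nat list \<Rightarrow> real" where
  "V as = (\<Prod>i<length as. (real (as ! i) + 2) / 2)"

end

theory Submission
  imports Defs
begin

definition cont :: "nat list \<Rightarrow> nat \<times> nat" where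
  "cont xs = foldl (\<lambda>(k,p) a. (a*k+p, k)) (1,0) xs"

lemma cont_snoc: "cont (xs @ [a]) = (a * fst (cont xs) + snd (cont xs), fst (cont xs))"
  unfolding cont_def by (simp add: case_prod_beta)

lemma cont_Nil: "cont [] = (1,0)" unfolding cont_def by simp

lemma S_cont: "i \<le> length bs \<Longrightarrow> twobridge_S bs i = fst (cont (take i bs))
   \<and> (0 < i \<longrightarrow> twobridge_S bs (i-1) = snd (cont (take i bs)))"
proof (induction bs i rule: twobridge_S.induct)
  case (1 bs)
  then show ?case by (simp add: cont_Nil)
next
  case (2 bs)
  then have "take (Suc 0) bs = [] @ [bs!0]" by (cases bs) auto
  then show ?case by (simp only: cont_snoc) (simp add: cont_Nil)
next
  case (3 bs i)
  have t: "take (Suc (Suc i)) bs = take (Suc i) bs @ [bs ! Suc i]"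
    using "3.prems" by (simp add: take_Suc_conv_app_nth)
  from "3.IH"(1) "3.prems" have h: "twobridge_S bs (Suc i) = fst (cont (take (Suc i) bs))"
     "twobridge_S bs i = snd (cont (take (Suc i) bs))" by auto
  show ?case unfolding t cont_snoc by (simp add: h)
qed

lemma det_cont: "det_R bs = fst (cont bs)"
  unfolding det_R_def using S_cont[of "length bs" bs] by simp

lemma V_snoc: "V (xs @ [a]) = V xs * ((real a + 2) / 2)"
  unfolding V_def by (simp add: nth_append)

lemma V_Nil: "V [] = 1" unfolding V_def by simp

definition G :: "nat list \<Rightarrow> bool" where
  "G xs \<longleftrightarrow> real (fst (cont xs)) \<ge> V xs \<and>
     2 * (real (fst (cont xs)) + real (snd (cont xs))) \<ge> 3 * V xs"

lemma G_step:
  assumes "G xs" "a > 0"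
  shows "G (xs @ [a])"
proof -
  define K where "K = real (fst (cont xs))"
  define P where "P = real (snd (cont xs))"
  define W where "W = V xs"
  have h1: "K \<ge> W" and h2: "2*(K+P) \<ge> 3*W" using assms(1) unfolding G_def K_def P_def W_def by auto
  have a1: "real a \<ge> 1" using assms(2) by simp
  have m1: "real a * K \<ge> real a * W" using h1 a1 by (simp add: mult_left_mono)
  have m2: "(real a - 1) * K \<ge> (real a - 1) * W" using h1 a1 by (simp add: mult_left_mono)
  have W0: "W \<ge> 0" unfolding W_def V_def by (simp add: prod_nonneg)
  have m3: "(real a - 1) * W \<ge> 0" using a1 W0 by simp
  have m4: "real a * W \<ge> 0" using a1 W0 by simp
  have e1: "2*(real a*K + P + K) = 2*(real a*K) + 2*(K+P)" by (simp add: algebra_simps)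
  have e2: "3*(W*((real a+2)/2)) = 3/2*(real a*W) + 3*W" by (simp add: field_simps)
  have e3: "real a*K + P = (real a - 1)*K + (K + P)" by (simp add: algebra_simps)
  have e4: "W*((real a+2)/2) = (real a - 1)*W + 3/2*W - ((real a - 1)*W)/2" by (simp add: field_simps)
  have g1: "real a * K + P \<ge> W * ((real a + 2) / 2)"
  proof -
    have lin: "t \<le> u \<Longrightarrow> 0 \<le> t \<Longrightarrow> t + 3/2*W - t/2 \<le> u + (K+P)" for t u :: real
      using h2 by (simp add: field_simps)
    show ?thesis unfolding e3 e4 by (rule lin[OF m2 m3])
  qed
  have g2: "2 * (real a * K + P + K) \<ge> 3 * (W * ((real a + 2) / 2))"
  proof -
    have lin: "t \<le> u \<Longrightarrow> 0 \<le> t \<Longrightarrow> 3/2*t + 3*W \<le> 2*u + 2*(K+P)" for t u :: real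
      using h2 by (simp add: field_simps)
    show ?thesis unfolding e1 e2 by (rule lin[OF m1 m4])
  qed
  show ?thesis unfolding G_def cont_snoc V_snoc
    using g1 g2 by (simp add: K_def P_def W_def algebra_simps)
qed

lemma G_app: "G xs \<Longrightarrow> \<forall>a\<in>set ys. a > 0 \<Longrightarrow> G (xs @ ys)"
proof (induction ys arbitrary: xs)
  case Nil then show ?case by simp
next
  case (Cons a ys)
  have "G (xs @ [a])" using Cons.prems by (intro G_step) auto
  then have "G ((xs @ [a]) @ ys)" using Cons.IH[of "xs @ [a]"] Cons.prems by simp
  then show ?case by simp
qed

lemma V_Cons: "V (a # xs) = ((real a + 2) / 2) * V xs"
  unfolding V_def length_Cons prod.lessThan_Suc_shift by simp

lemma cont_Cons_eval: "cont (a # xs) = foldl (\<lambda>(k,p) a. (a*k+p, k)) (a,1) xs"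
  unfolding cont_def by simp

lemma fin: "G xs \<Longrightarrow> \<forall>a\<in>set ys. a > 0 \<Longrightarrow> real (det_R (xs @ ys)) \<ge> V (xs @ ys)"
  using G_app[of xs ys] unfolding G_def det_cont by auto

lemma G1: "a \<ge> 2 \<Longrightarrow> G [a]"
  unfolding G_def cont_def V_def by simp

lemma G11c: "c \<ge> 2 \<Longrightarrow> G [1,1,c]"
  unfolding G_def cont_def by (simp add: V_Cons V_Nil)

lemma G111d: "d \<ge> 2 \<Longrightarrow> G [1,1,1,d]"
  unfolding G_def cont_def by (simp add: V_Cons V_Nil)

lemma G1111e: "e \<ge> 1 \<Longrightarrow> G [1,1,1,1,e]"
  unfolding G_def cont_def by (simp add: V_Cons V_Nil)

lemma G1bc: "b \<ge> 2 \<Longrightarrow> c \<ge> 2 \<Longrightarrow> G [1,b,c]"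
proof -
  assume "b \<ge> 2" "c \<ge> 2"
  then obtain x y where b: "b = x + 2" and c: "c = y + 2" by (metis add.commute le_Suc_ex)
  show ?thesis unfolding G_def cont_def b c using mult_nonneg_nonneg[of "real x" "real y"] by (simp add: V_Cons V_Nil algebra_simps)
qed

lemma G1b1d: "b \<ge> 2 \<Longrightarrow> d \<ge> 2 \<Longrightarrow> G [1,b,1,d]"
proof -
  assume "b \<ge> 2" "d \<ge> 2"
  then obtain x y where b: "b = x + 2" and c: "d = y + 2" by (metis add.commute le_Suc_ex)
  have xy: "0 \<le> real x * real y" by simp
  show ?thesis unfolding G_def cont_def b c
    by (simp add: V_Cons V_Nil field_simps)
qed

lemma L1b: "b \<ge> 2 \<Longrightarrow> real (det_R [1,b]) \<ge> V [1,b]"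
  unfolding det_cont cont_def by (simp add: V_Cons V_Nil)


lemma G1b11: "b \<ge> 2 \<Longrightarrow> G [1,b,1,1]"
  unfolding G_def cont_def by (simp add: V_Cons V_Nil field_simps)

theorem corollary3p6:
  fixes as :: "nat list"
  assumes pos: "\<forall>a\<in>set as. a > 0"
    and n1: "as \<noteq> [1, 1, 1, 1]"
    and n2: "\<forall>a2. as \<noteq> [1, a2, 1]"
    and n3: "as \<noteq> [1, 1]"
    and n4: "as \<noteq> [1]"
  shows "real (det_R as) \<ge> V as"
proof (cases as)
  case Nil
  then show ?thesis by (simp add: det_cont cont_Nil V_Nil)
next
  case (Cons a r)
  note as = Cons
  have pr: "\<forall>x\<in>set r. x > 0" using pos as by simp
  show ?thesis
  proof (cases "a \<ge> 2")
    case True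
    then show ?thesis using fin[OF G1[OF True] pr] as by simp
  next
    case False
    with pos as have a: "a = 1" by auto
    obtain b r2 where r: "r = b # r2" using n4 as a by (cases r) auto
    have pr2: "\<forall>x\<in>set r2. x > 0" and b0: "b > 0" using pr r by auto
    show ?thesis
    proof (cases "b \<ge> 2")
      case b2: True
      show ?thesis
      proof (cases r2)
        case Nil
        then show ?thesis using L1b[OF b2] as a r by simp
      next
        case (Cons c r3)
        have pr3: "\<forall>x\<in>set r3. x > 0" and c0: "c > 0" using pr2 Cons by auto
        show ?thesis
        proof (cases "c \<ge> 2")
          case True
          then show ?thesis using fin[OF G1bc[OF b2 True] pr3] as a r Cons by simp
        next
          case False
          with c0 have c: "c = 1" by auto
          obtain d r4 where r3: "r3 = d # r4" using n2 as a r Cons c by (cases r3) auto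
          have pr4: "\<forall>x\<in>set r4. x > 0" and d0: "d > 0" using pr3 r3 by auto
          show ?thesis
          proof (cases "d \<ge> 2")
            case True
            then show ?thesis using fin[OF G1b1d[OF b2 True] pr4] as a r Cons c r3 by simp
          next
            case False
            with d0 have d: "d = 1" by auto
            show ?thesis using fin[OF G1b11[OF b2] pr4] as a r Cons c r3 d by simp
          qed
        qed
      qed
    next
      case False
      with b0 have b: "b = 1" by auto
      obtain c r3 where r2: "r2 = c # r3" using n3 as a r b by (cases r2) auto
      have pr3: "\<forall>x\<in>set r3. x > 0" and c0: "c > 0" using pr2 r2 by auto
      show ?thesis
      proof (cases "c \<ge> 2")
        case True
        then show ?thesis using fin[OF G11c[OF True] pr3] as a r b r2 by simp
      next
        case False
        with c0 have c: "c = 1" by auto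
        obtain d r4 where r3: "r3 = d # r4" using n2 as a r b r2 c by (cases r3) auto
        have pr4: "\<forall>x\<in>set r4. x > 0" and d0: "d > 0" using pr3 r3 by auto
        show ?thesis
        proof (cases "d \<ge> 2")
          case True
          then show ?thesis using fin[OF G111d[OF True] pr4] as a r b r2 c r3 by simp
        next
          case False
          with d0 have d: "d = 1" by auto
          obtain e r5 where r4: "r4 = e # r5" using n1 as a r b r2 c r3 d by (cases r4) auto
          have pr5: "\<forall>x\<in>set r5. x > 0" and e0: "e \<ge> 1" using pr4 r4 by auto
          show ?thesis using fin[OF G1111e[OF e0] pr5] as a r b r2 c r3 d r4 by simp
        qed
      qed
    qed
  qed
qed

end
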